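(* Let $\Sigma=(X,\mathcal U,\phi)$ be a forward complete control system which has the CEP property. If $\Sigma$ is norm-to-integral ISS, then $\Sigma$ is uniformly locally stable (ULS).
   Context: Let $X$, $U$ be Banach spaces and let $\mathcal U$ be a normed vector space of functions $\mathbb R_+\to U$ satisfying: (shift invariance) for all $u\in\mathcal U$ and $\tau\ge0$, $u(\cdot+\tau)\in\mathcal U$ and $\|u(\cdot+\tau)\|_{\mathcal U}\le\|u\|_{\mathcal U}$; (concatenation) for all $u_1,u_2\in\mathcal U$ and $t>0$ the function equal to $u_1(\tau)$ for $\tau\in[0,t]$ and to $u_2(\tau-t)$ for $\tau>t$ belongs to $\mathcal U$. A forward complete control system is a triple $\Sigma=(X,\mathcal U,\phi)$ with $\phi:\mathbb R_+\times X\times\mathcal U\to X$ such that: $\phi(0,x,u)=x$; (causality) $\phi(t,x,u)=\phi(t,x,\tilde u)$ whenever $u|_{[0,t]}=\tilde u|_{[0,t]}$; for each $(x,u)$ the map $t\mapsto\phi(t,x,u)$ is continuous; (cocycle) $\phi(h,\phi(t,x,u),u(t+\cdot))=\phi(t+h,x,u)$ for all $t,h\ge0$, $x\in X$, $u\in\mathcal U$. Comparison functions: $\mathcal K$ = continuous strictly increasing $\gamma:\mathbb R_+\to\mathbb R_+$ with $\gamma(0)=0$; $\mathcal K_\infty$ = unbounded functions in $\mathcal K$. $\Sigma$ has the CEP property (continuity at the equilibrium point) if $\phi(t,0,0)=0$ for all $t\ge0$ and for every $\varepsilon>0$ and $h>0$ there is $\delta>0$ such that $t\in[0,h]$, $\|x\|_X\le\delta$,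 $\|u\|_{\mathcal U}\le\delta$ imply $\|\phi(t,x,u)\|_X\le\varepsilon$. $\Sigma$ is ULS if there exist $\sigma,\gamma\in\mathcal K_\infty$ and $r>0$ such that $\|\phi(t,x,u)\|_X\le\sigma(\|x\|_X)+\gamma(\|u\|_{\mathcal U})$ for all $t\ge0$, all $\|x\|_X\le r$ and all $\|u\|_{\mathcal U}\le r$. $\Sigma$ is norm-to-integral ISS if there are $\alpha\in\mathcal K$, $\psi,\sigma\in\mathcal K_\infty$ with $\int_0^t\alpha(\|\phi(s,x,u)\|_X)\,ds\le\psi(\|x\|_X)+t\,\sigma(\|u\|_{\mathcal U})$ for all $x\in X$, $u\in\mathcal U$, $t\ge0$. *)

theory Defs
  imports "HOL-Analysis.Analysis"
begin

definition class_K :: "(real \<Rightarrow> real) \<Rightarrow> bool" where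
  "class_K \<gamma> \<longleftrightarrow> continuous_on {0..} \<gamma> \<and> strict_mono_on {0..} \<gamma> \<and> \<gamma> 0 = 0
     \<and> (\<forall>s\<ge>0. \<gamma> s \<ge> 0)"

definition class_Kinf :: "(real \<Rightarrow> real) \<Rightarrow> bool" where
  "class_Kinf \<gamma> \<longleftrightarrow> class_K \<gamma> \<and> (\<forall>M. \<exists>s\<ge>0. \<gamma> s > M)"

text \<open>Functions R+ -> U are represented by functions real => 'u that vanish
  on the negative reals (canonical representatives).\<close>

definition shift_input :: "(real \<Rightarrow> 'u::zero) \<Rightarrow> real \<Rightarrow> (real \<Rightarrow> 'u)" where
  "shift_input u \<tau> = (\<lambda>s. if s < 0 then 0 else u (s + \<tau>))"

definition concat_input :: "(real \<Rightarrow> 'u::zero) \<Rightarrow> (real \<Rightarrow> 'u) \<Rightarrow> real \<Rightarrow> (real \<Rightarrow> 'u)" where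
  "concat_input u1 u2 t = (\<lambda>s. if s < 0 then 0 else if s \<le> t then u1 s else u2 (s - t))"

definition input_space :: "(real \<Rightarrow> 'u::real_normed_vector) set \<Rightarrow> ((real \<Rightarrow> 'u) \<Rightarrow> real) \<Rightarrow> bool" where
  "input_space Uc nU \<longleftrightarrow>
     (\<forall>u\<in>Uc. \<forall>s<0. u s = 0) \<and>
     (\<lambda>_. 0) \<in> Uc \<and>
     (\<forall>u\<in>Uc. \<forall>v\<in>Uc. (\<lambda>s. u s + v s) \<in> Uc) \<and>
     (\<forall>u\<in>Uc. \<forall>c::real. (\<lambda>s. c *\<^sub>R u s) \<in> Uc) \<and>
     (\<forall>u\<in>Uc. nU u \<ge> 0) \<and>
     (\<forall>u\<in>Uc. nU u = 0 \<longleftrightarrow> u = (\<lambda>_. 0)) \<and>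
     (\<forall>u\<in>Uc. \<forall>c::real. nU (\<lambda>s. c *\<^sub>R u s) = \<bar>c\<bar> * nU u) \<and>
     (\<forall>u\<in>Uc. \<forall>v\<in>Uc. nU (\<lambda>s. u s + v s) \<le> nU u + nU v) \<and>
     (\<forall>u\<in>Uc. \<forall>\<tau>\<ge>0. shift_input u \<tau> \<in> Uc \<and> nU (shift_input u \<tau>) \<le> nU u) \<and>
     (\<forall>u1\<in>Uc. \<forall>u2\<in>Uc. \<forall>t>0. concat_input u1 u2 t \<in> Uc)"

definition forward_complete_system ::
  "(real \<Rightarrow> 'u::real_normed_vector) set \<Rightarrow> ((real \<Rightarrow> 'u) \<Rightarrow> real)
     \<Rightarrow> (real \<Rightarrow> 'x::real_normed_vector \<Rightarrow> (real \<Rightarrow> 'u) \<Rightarrow> 'x) \<Rightarrow> bool" where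
  "forward_complete_system Uc nU \<phi> \<longleftrightarrow>
     input_space Uc nU \<and>
     (\<forall>x. \<forall>u\<in>Uc. \<phi> 0 x u = x) \<and>
     (\<forall>t\<ge>0. \<forall>x. \<forall>u\<in>Uc. \<forall>v\<in>Uc. (\<forall>s\<in>{0..t}. u s = v s) \<longrightarrow> \<phi> t x u = \<phi> t x v) \<and>
     (\<forall>x. \<forall>u\<in>Uc. continuous_on {0..} (\<lambda>t. \<phi> t x u)) \<and>
     (\<forall>t\<ge>0. \<forall>h\<ge>0. \<forall>x. \<forall>u\<in>Uc. \<phi> h (\<phi> t x u) (shift_input u t) = \<phi> (t + h) x u)"

definition CEP ::
  "(real \<Rightarrow> 'u::real_normed_vector) set \<Rightarrow> ((real \<Rightarrow> 'u) \<Rightarrow> real)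
     \<Rightarrow> (real \<Rightarrow> 'x::real_normed_vector \<Rightarrow> (real \<Rightarrow> 'u) \<Rightarrow> 'x) \<Rightarrow> bool" where
  "CEP Uc nU \<phi> \<longleftrightarrow>
     (\<forall>t\<ge>0. \<phi> t 0 (\<lambda>_. 0) = 0) \<and>
     (\<forall>\<epsilon>>0. \<forall>h>0. \<exists>\<delta>>0. \<forall>t\<in>{0..h}. \<forall>x. \<forall>u\<in>Uc.
        norm x \<le> \<delta> \<and> nU u \<le> \<delta> \<longrightarrow> norm (\<phi> t x u) \<le> \<epsilon>)"

definition ULS ::
  "(real \<Rightarrow> 'u::real_normed_vector) set \<Rightarrow> ((real \<Rightarrow> 'u) \<Rightarrow> real)
     \<Rightarrow> (real \<Rightarrow> 'x::real_normed_vector \<Rightarrow> (real \<Rightarrow> 'u) \<Rightarrow> 'x) \<Rightarrow> bool" where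
  "ULS Uc nU \<phi> \<longleftrightarrow>
     (\<exists>\<sigma> \<gamma> r. class_Kinf \<sigma> \<and> class_Kinf \<gamma> \<and> r > 0 \<and>
        (\<forall>t\<ge>0. \<forall>x. \<forall>u\<in>Uc. norm x \<le> r \<and> nU u \<le> r \<longrightarrow>
           norm (\<phi> t x u) \<le> \<sigma> (norm x) + \<gamma> (nU u)))"

definition norm_to_integral_ISS ::
  "(real \<Rightarrow> 'u::real_normed_vector) set \<Rightarrow> ((real \<Rightarrow> 'u) \<Rightarrow> real)
     \<Rightarrow> (real \<Rightarrow> 'x::real_normed_vector \<Rightarrow> (real \<Rightarrow> 'u) \<Rightarrow> 'x) \<Rightarrow> bool" where
  "norm_to_integral_ISS Uc nU \<phi> \<longleftrightarrow>
     (\<exists>\<alpha> \<psi> \<sigma>. class_K \<alpha> \<and> class_Kinf \<psi> \<and> class_Kinf \<sigma> \<and>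
        (\<forall>x. \<forall>u\<in>Uc. \<forall>t\<ge>0.
           integral {0..t} (\<lambda>s. \<alpha> (norm (\<phi> s x u))) \<le> \<psi> (norm x) + t * \<sigma> (nU u)))"

end

theory Submission
  imports Defs
begin


lemma K_mono: "class_K \<gamma> \<Longrightarrow> 0 \<le> a \<Longrightarrow> a \<le> b \<Longrightarrow> \<gamma> a \<le> \<gamma> b"
  unfolding class_K_def
  by (metis atLeast_iff order_le_less order_trans strict_mono_onD less_imp_le)

lemma K_less: "class_K \<gamma> \<Longrightarrow> 0 \<le> a \<Longrightarrow> a < b \<Longrightarrow> \<gamma> a < \<gamma> b"
  unfolding class_K_def
  by (meson atLeast_iff less_imp_le order_trans strict_mono_onD)

lemma K_pos: "class_K \<gamma> \<Longrightarrow> 0 < a \<Longrightarrow> 0 < \<gamma> a"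
  using K_less[of \<gamma> 0 a] unfolding class_K_def by auto

lemma K_small:
  assumes "class_K \<gamma>" "e > 0"
  shows "\<exists>d>0. \<gamma> d < e"
proof -
  have c: "continuous_on {0..} \<gamma>" and z: "\<gamma> 0 = 0" using assms unfolding class_K_def by auto
  from c have "\<exists>d>0. \<forall>x'\<in>{0..}. dist x' 0 < d \<longrightarrow> dist (\<gamma> x') (\<gamma> 0) < e"
    using c assms(2) unfolding continuous_on_iff by (metis atLeast_iff order_refl)
  then obtain d where d: "d > 0" "\<forall>x'\<in>{0..}. dist x' 0 < d \<longrightarrow> dist (\<gamma> x') (\<gamma> 0) < e" by blast
  have "dist (\<gamma> (d/2)) (\<gamma> 0) < e" using d by auto
  then show ?thesis using z d(1) by (intro exI[of _ "d/2"]) (auto simp: dist_real_def)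
qed



lemma majorant:
  fixes d :: "nat \<Rightarrow> real"
  assumes dpos: "\<And>n. d n > 0"
  defines "\<kappa> \<equiv> \<lambda>s. s + (\<Sum>n. (1/2)^n * min 1 (s / d (Suc n)))"
  shows "class_Kinf \<kappa>"
    and "\<And>s n. 0 \<le> s \<Longrightarrow> d (Suc n) < s \<Longrightarrow> (1/2)^n \<le> \<kappa> s"
proof -
  define g where "g = (\<lambda>n s. (1/2::real)^n * min 1 (s / d (Suc n)))"
  have gb: "norm (g n s) \<le> (1/2)^n" if "s \<ge> 0" for n s
    using that dpos[of "Suc n"] by (auto simp: g_def abs_mult min_def)
  have gnn: "0 \<le> g n s" if "s \<ge> 0" for n s
    using that dpos[of "Suc n"] by (auto simp: g_def min_def)
  have sm: "summable (\<lambda>n. (1/2::real)^n)" by simp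
  have gs: "summable (\<lambda>n. g n s)" if "s \<ge> 0" for s
    by (rule summable_comparison_test[OF _ sm]) (use gb that in auto)
  have gmono: "g n s \<le> g n t" if "0 \<le> s" "s \<le> t" for n s t
    using that dpos[of "Suc n"] unfolding g_def
    by (intro mult_left_mono) (auto simp: min_def divide_right_mono)
  have kdef: "\<kappa> s = s + (\<Sum>n. g n s)" for s unfolding \<kappa>_def g_def by simp
  have cont: "continuous_on {0..} \<kappa>"
  proof -
    have ul: "uniform_limit {0..} (\<lambda>n x. \<Sum>i<n. g i x) (\<lambda>x. suminf (\<lambda>i. g i x)) sequentially"
      by (rule Weierstrass_m_test[OF _ sm]) (use gb in auto)
    have "continuous_on {0..} (\<lambda>x. suminf (\<lambda>i. g i x))"
      by (rule uniform_limit_theorem[OF _ ul]) (auto simp: g_def intro!: continuous_intros always_eventually dpos less_imp_neq[symmetric])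
    then show ?thesis unfolding kdef by (intro continuous_intros)
  qed
  have z: "\<kappa> 0 = 0" unfolding kdef g_def by simp
  have smono: "strict_mono_on {0..} \<kappa>"
  proof (rule strict_mono_onI)
    fix r s :: real assume "r \<in> {0..}" "s \<in> {0..}" "r < s"
    then have "(\<Sum>n. g n r) \<le> (\<Sum>n. g n s)"
      by (intro suminf_le gs gmono) auto
    then show "\<kappa> r < \<kappa> s" unfolding kdef using \<open>r < s\<close> by simp
  qed
  have nn: "\<kappa> s \<ge> s" if "s \<ge> 0" for s
    using suminf_nonneg[OF gs[OF that] gnn[OF that]] unfolding kdef by simp
  show "class_Kinf \<kappa>"
    unfolding class_Kinf_def class_K_def
  proof (intro conjI cont smono z allI impI)
    fix s :: real assume "0 \<le> s" then show "0 \<le> \<kappa> s" using nn by force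
  next
    fix M :: real show "\<exists>s\<ge>0. M < \<kappa> s"
      by (rule exI[of _ "max 0 M + 1"]) (use nn[of "max 0 M + 1"] in auto)
  qed
  fix s n assume s: "0 \<le> s" "d (Suc n) < s"
  have "g n s = (1/2)^n" using s dpos[of "Suc n"] by (auto simp: g_def min_def)
  moreover have "g n s \<le> (\<Sum>n. g n s)"
    using sum_le_suminf[OF gs[OF s(1)], of "{n}"] gnn[OF s(1)] by auto
  ultimately show "(1/2)^n \<le> \<kappa> s" unfolding kdef using s by simp
qed



lemma stab:
  fixes Uc :: "(real \<Rightarrow> 'u::banach) set"
    and nU :: "(real \<Rightarrow> 'u) \<Rightarrow> real"
    and \<phi> :: "real \<Rightarrow> 'x::banach \<Rightarrow> (real \<Rightarrow> 'u) \<Rightarrow> 'x"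
  assumes fc: "forward_complete_system Uc nU \<phi>"
    and cep: "CEP Uc nU \<phi>"
    and iss: "norm_to_integral_ISS Uc nU \<phi>"
    and eps: "\<epsilon> > 0"
  shows "\<exists>\<delta>>0. \<forall>x. \<forall>u\<in>Uc. \<forall>t\<ge>0. norm x \<le> \<delta> \<and> nU u \<le> \<delta> \<longrightarrow> norm (\<phi> t x u) \<le> \<epsilon>"
proof -
  obtain \<alpha> \<psi> \<sigma> where K: "class_K \<alpha>" "class_Kinf \<psi>" "class_Kinf \<sigma>"
    and I: "\<And>x u t. u \<in> Uc \<Longrightarrow> t \<ge> 0 \<Longrightarrow>
           integral {0..t} (\<lambda>s. \<alpha> (norm (\<phi> s x u))) \<le> \<psi> (norm x) + t * \<sigma> (nU u)"
    using iss unfolding norm_to_integral_ISS_def by blast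
  have Kp: "class_K \<psi>" "class_K \<sigma>" using K unfolding class_Kinf_def by auto
  have fcd: "input_space Uc nU \<and>
     (\<forall>x. \<forall>u\<in>Uc. \<phi> 0 x u = x) \<and>
     (\<forall>t\<ge>0. \<forall>x. \<forall>u\<in>Uc. \<forall>v\<in>Uc. (\<forall>s\<in>{0..t}. u s = v s) \<longrightarrow> \<phi> t x u = \<phi> t x v) \<and>
     (\<forall>x. \<forall>u\<in>Uc. continuous_on {0..} (\<lambda>t. \<phi> t x u)) \<and>
     (\<forall>t\<ge>0. \<forall>h\<ge>0. \<forall>x. \<forall>u\<in>Uc. \<phi> h (\<phi> t x u) (shift_input u t) = \<phi> (t + h) x u)"
    using fc unfolding forward_complete_system_def .
  have IS: "input_space Uc nU" using fcd by (rule conjunct1)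
  have phi0: "\<And>x u. u \<in> Uc \<Longrightarrow> \<phi> 0 x u = x"
    and cont: "\<And>x u. u \<in> Uc \<Longrightarrow> continuous_on {0..} (\<lambda>t. \<phi> t x u)"
    and coc: "\<And>t h x u. t \<ge> 0 \<Longrightarrow> h \<ge> 0 \<Longrightarrow> u \<in> Uc \<Longrightarrow> \<phi> h (\<phi> t x u) (shift_input u t) = \<phi> (t + h) x u"
    using fcd by blast+
  have shU: "\<And>u \<tau>. u \<in> Uc \<Longrightarrow> \<tau> \<ge> 0 \<Longrightarrow> shift_input u \<tau> \<in> Uc \<and> nU (shift_input u \<tau>) \<le> nU u"
    using IS unfolding input_space_def by blast
  obtain \<delta>1 where d1: "\<delta>1 > 0" and
    C1: "\<And>t y v. t \<in> {0..1} \<Longrightarrow> v \<in> Uc \<Longrightarrow> norm y \<le> \<delta>1 \<Longrightarrow> nU v \<le> \<delta>1 \<Longrightarrow> norm (\<phi> t y v) \<le> \<epsilon>"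
    using cep eps unfolding CEP_def by (meson zero_less_one)
  have a1: "\<alpha> \<delta>1 > 0" using K_pos[OF K(1) d1] .
  obtain e2 where e2: "e2 > 0" "\<psi> e2 < \<alpha> \<delta>1 / 2" using K_small[OF Kp(1), of "\<alpha> \<delta>1 / 2"] a1 by auto
  define \<delta>2 where "\<delta>2 = min \<delta>1 e2"
  have d2: "\<delta>2 > 0" "\<delta>2 \<le> \<delta>1" using d1 e2 by (auto simp: \<delta>2_def)
  have p2: "\<psi> \<delta>2 < \<alpha> \<delta>1 / 2" using K_mono[OF Kp(1), of \<delta>2 e2] d2 e2 by (auto simp: \<delta>2_def)
  have a2: "\<alpha> \<delta>2 > 0" "\<alpha> \<delta>2 \<le> \<alpha> \<delta>1" using K_pos[OF K(1) d2(1)] K_mono[OF K(1), of \<delta>2 \<delta>1] d2 by auto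
  obtain e3 where e3: "e3 > 0" "\<sigma> e3 < \<alpha> \<delta>2 / 2" using K_small[OF Kp(2), of "\<alpha> \<delta>2 / 2"] a2 by auto
  define \<delta> where "\<delta> = min \<delta>2 e3"
  have d: "\<delta> > 0" "\<delta> \<le> \<delta>2" using d2 e3 by (auto simp: \<delta>_def)
  have s3: "\<sigma> \<delta> < \<alpha> \<delta>2 / 2" using K_mono[OF Kp(2), of \<delta> e3] d e3 by (auto simp: \<delta>_def)
  have "\<forall>x. \<forall>u\<in>Uc. \<forall>t\<ge>0. norm x \<le> \<delta> \<and> nU u \<le> \<delta> \<longrightarrow> norm (\<phi> t x u) \<le> \<epsilon>"
  proof (intro allI ballI impI, elim conjE, rule ccontr)
    fix x u t assume u: "u \<in> Uc" and t: "t \<ge> 0" and x: "norm x \<le> \<delta>" and nu: "nU u \<le> \<delta>"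
      and big: "\<not> norm (\<phi> t x u) \<le> \<epsilon>"
    have nu0: "nU u \<ge> 0" using IS u unfolding input_space_def by auto
    define S where "S = {0..t} \<inter> (\<lambda>s. \<phi> s x u) -` {y. norm y \<le> \<delta>2}"
    have "continuous_on {0..t} (\<lambda>s. \<phi> s x u)" using cont[OF u] by (rule continuous_on_subset) auto
    then have "closed S" unfolding S_def
      by (intro continuous_closed_preimage) (auto intro: closed_Collect_le continuous_intros)
    then have "compact ({0..t} \<inter> S)" by (intro compact_Int_closed) auto
    moreover have "{0..t} \<inter> S = S" by (auto simp: S_def)
    ultimately have "compact S" by simp
    moreover have "0 \<in> S" using t x d phi0[OF u] by (auto simp: S_def)
    ultimately obtain s2 where s2: "s2 \<in> S" "\<And>s. s \<in> S \<Longrightarrow> s \<le> s2"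
      using compact_attains_sup[of S] by blast
    have s2t: "0 \<le> s2" "s2 \<le> t" and ys: "norm (\<phi> s2 x u) \<le> \<delta>2" using s2(1) by (auto simp: S_def)
    define T where "T = t - s2"
    define y where "y = \<phi> s2 x u"
    define v where "v = shift_input u s2"
    have v: "v \<in> Uc" "nU v \<le> \<delta>" using shU[OF u s2t(1)] nu by (auto simp: v_def)
    have yv: "\<phi> h y v = \<phi> (s2 + h) x u" if "h \<ge> 0" for h
      using coc[OF s2t(1) that u] by (simp add: y_def v_def)
    have T1: "T > 1"
    proof (rule ccontr)
      assume "\<not> T > 1"
      then have "norm (\<phi> T y v) \<le> \<epsilon>" using C1[of T v y] s2t v ys d d2 by (auto simp: T_def y_def)
      then show False using big yv[of T] s2t by (simp add: T_def)
    qed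
    have above2: "norm (\<phi> s y v) > \<delta>2" if "0 < s" "s \<le> T" for s
    proof (rule ccontr)
      assume "\<not> ?thesis"
      then have "s2 + s \<in> S" using yv[of s] that s2t by (auto simp: S_def T_def)
      then show False using s2(2) that by force
    qed
    have above1: "norm (\<phi> s y v) > \<delta>1" if "T - 1 \<le> s" "s \<le> T" for s
    proof (rule ccontr)
      assume "\<not> ?thesis"
      then have z: "norm (\<phi> (s2 + s) x u) \<le> \<delta>1" using yv[of s] that T1 by auto
      have w: "shift_input u (s2+s) \<in> Uc" "nU (shift_input u (s2+s)) \<le> \<delta>1"
        using shU[OF u, of "s2+s"] that T1 s2t nu d d2 by auto
      have "norm (\<phi> (T - s) (\<phi> (s2 + s) x u) (shift_input u (s2+s))) \<le> \<epsilon>"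
        using C1[OF _ w(1) z w(2)] that by auto
      also have "\<phi> (T - s) (\<phi> (s2 + s) x u) (shift_input u (s2+s)) = \<phi> t x u"
        using coc[OF _ _ u, of "s2+s" "T-s" x] that T1 s2t by (simp add: T_def)
      finally show False using big by simp
    qed
    define f where "f = (\<lambda>s. \<alpha> (norm (\<phi> s y v)))"
    have fc: "continuous_on {0..T} f"
    proof -
      have c1: "continuous_on {0..T} (\<lambda>s. norm (\<phi> s y v))"
        using cont[OF v(1)] by (intro continuous_intros) (rule continuous_on_subset, auto)
      have c2: "continuous_on {0..} \<alpha>" using K(1) unfolding class_K_def by auto
      show ?thesis unfolding f_def
        by (rule continuous_on_compose2[OF c2 c1]) auto
    qed
    have fi: "f integrable_on {0..T}" using fc by (rule integrable_continuous_interval)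
    have split: "integral {0..T} f = integral {0..T-1} f + integral {T-1..T} f"
      using Henstock_Kurzweil_Integration.integral_combine[where f=f and a=0 and c="T-1" and b=T] T1 fi by simp
    have low1: "integral {T-1..T} f \<ge> \<alpha> \<delta>1"
    proof -
      have "integral {T-1..T} (\<lambda>_. \<alpha> \<delta>1) \<le> integral {T-1..T} f"
        using fi T1
        by (intro integral_le integrable_on_subinterval[OF fi])
           (auto simp: f_def intro!: less_imp_le[OF K_less[OF K(1)]] above1 less_imp_le[OF d1])
      then show ?thesis by simp
    qed
    have low2: "integral {0..T-1} f \<ge> (T - 1) * \<alpha> \<delta>2"
    proof -
      define g where "g = (\<lambda>s. max (\<alpha> \<delta>2) (f s))"
      have fi2: "f integrable_on {0..T-1}" using fi T1 by (intro integrable_on_subinterval[OF fi]) auto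
      have gi: "g integrable_on {0..T-1}" unfolding g_def
        using fc T1 by (intro integrable_continuous_interval continuous_intros)
          (rule continuous_on_subset, auto)
      have eq: "integral {0..T-1} f = integral {0..T-1} g"
      proof (rule integral_spike[of "{0}"])
        fix s assume "s \<in> {0..T-1} - {0}"
        then have "\<alpha> \<delta>2 \<le> f s" unfolding f_def
          using K_less[OF K(1), of \<delta>2 "norm (\<phi> s y v)"] above2[of s] d2 by auto
        then show "g s = f s" by (simp add: g_def)
      qed simp
      have "integral {0..T-1} (\<lambda>_. \<alpha> \<delta>2) \<le> integral {0..T-1} g"
        by (intro integral_le gi) (auto simp: g_def)
      then show ?thesis using eq T1 by simp
    qed
    have up: "integral {0..T} f \<le> \<psi> (norm y) + T * \<sigma> (nU v)"
      unfolding f_def using I[OF v(1), of T y] T1 by simp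
    have "\<psi> (norm y) \<le> \<psi> \<delta>2" using K_mono[OF Kp(1)] ys by (simp add: y_def)
    moreover have "\<sigma> (nU v) \<le> \<sigma> \<delta>" using K_mono[OF Kp(2)] v(2) shU[OF u s2t(1)] IS v(1)
      unfolding input_space_def by auto
    ultimately have "(T - 1) * \<alpha> \<delta>2 + \<alpha> \<delta>1 \<le> \<psi> \<delta>2 + T * \<sigma> \<delta>"
      using up low1 low2 split mult_left_mono[of "\<sigma> (nU v)" "\<sigma> \<delta>" T] T1 by linarith
    moreover have "(T - 1) * \<sigma> \<delta> \<le> (T - 1) * \<alpha> \<delta>2"
      using s3 a2 T1 by (intro mult_left_mono) auto
    ultimately show False using p2 s3 a2 by (simp add: algebra_simps)
  qed
  then show ?thesis using d by blast
qed



theorem mainTheorem2: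
  fixes Uc :: "(real \<Rightarrow> 'u::banach) set"
    and nU :: "(real \<Rightarrow> 'u) \<Rightarrow> real"
    and \<phi> :: "real \<Rightarrow> 'x::banach \<Rightarrow> (real \<Rightarrow> 'u) \<Rightarrow> 'x"
  assumes "forward_complete_system Uc nU \<phi>"
    and "CEP Uc nU \<phi>"
    and "norm_to_integral_ISS Uc nU \<phi>"
  shows "ULS Uc nU \<phi>"
proof -
  have "\<forall>n::nat. \<exists>\<delta>>0. \<forall>x. \<forall>u\<in>Uc. \<forall>t\<ge>0. norm x \<le> \<delta> \<and> nU u \<le> \<delta> \<longrightarrow> norm (\<phi> t x u) \<le> (1/2)^n"
    using stab[OF assms] by simp
  then obtain dd where dd: "\<And>n. dd n > 0"
    and ddp: "\<And>n x u t. u \<in> Uc \<Longrightarrow> t \<ge> 0 \<Longrightarrow> norm x \<le> dd n \<Longrightarrow> nU u \<le> dd n \<Longrightarrow> norm (\<phi> t x u) \<le> (1/2)^n"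
    by metis
  define D where "D n = min (dd n) ((1/2)^n)" for n
  have Dp: "D n > 0" for n using dd[of n] by (simp add: D_def)
  define \<kappa> where "\<kappa> \<equiv> \<lambda>s::real. s + (\<Sum>n. (1/2)^n * min 1 (s / D (Suc n)))"
  have KK: "class_Kinf \<kappa>" and Kb: "\<And>s n. 0 \<le> s \<Longrightarrow> D (Suc n) < s \<Longrightarrow> (1/2)^n \<le> \<kappa> s"
    using majorant[of D, OF Dp] unfolding \<kappa>_def by auto
  have Kc: "class_K \<kappa>" using KK unfolding class_Kinf_def by auto
  have IS: "input_space Uc nU" using assms(1) unfolding forward_complete_system_def by (rule conjunct1)
  have z0: "\<And>t. t \<ge> 0 \<Longrightarrow> \<phi> t 0 (\<lambda>_. 0) = 0" using assms(2) unfolding CEP_def by blast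
  have bound: "norm (\<phi> t x u) \<le> \<kappa> (norm x) + \<kappa> (nU u)"
    if u: "u \<in> Uc" and t: "t \<ge> 0" and x: "norm x \<le> D 0" and nu: "nU u \<le> D 0" for t x u
  proof -
    have nu0: "nU u \<ge> 0" using IS u unfolding input_space_def by blast
    have nz: "nU u = 0 \<longleftrightarrow> u = (\<lambda>_. 0)" using IS u unfolding input_space_def by blast
    define m where "m = max (norm x) (nU u)"
    have km: "\<kappa> m \<le> \<kappa> (norm x) + \<kappa> (nU u)"
      using Kc nu0 unfolding m_def class_K_def by (auto simp: max_def)
    show ?thesis
    proof (cases "m = 0")
      case True
      then have "x = 0" "u = (\<lambda>_. 0)" using nz nu0 by (auto simp: m_def max_def split: if_splits)
      then show ?thesis using z0[OF t] km True Kc unfolding class_K_def by auto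
    next
      case False
      then have mp: "m > 0" using nu0 by (auto simp: m_def max_def)
      obtain N where "(1/2::real)^N < m" using real_arch_pow_inv[OF mp, of "1/2"] by auto
      then have ex: "D N < m" using min.cobounded2[of "dd N" "(1/2)^N"] unfolding D_def by linarith
      define k where "k = (LEAST n. D n < m)"
      have k1: "D k < m" unfolding k_def by (rule LeastI[where P="\<lambda>n. D n < m", OF ex])
      have k0: "k \<noteq> 0" using k1 x nu by (cases k) (auto simp: m_def)
      then obtain n where kn: "k = Suc n" by (cases k) auto
      have "\<not> D n < m" unfolding k_def using not_less_Least[of n "\<lambda>n. D n < m"] kn k_def by auto
      then have "norm (\<phi> t x u) \<le> (1/2)^n"
        using ddp[OF u t] unfolding D_def m_def by (meson le_less_trans linorder_not_le max.boundedE min.boundedE not_le)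
      also have "\<dots> \<le> \<kappa> m" using Kb[of m n] k1 kn mp by auto
      finally show ?thesis using km by linarith
    qed
  qed
  show ?thesis unfolding ULS_def
    by (rule exI[of _ \<kappa>], rule exI[of _ \<kappa>], rule exI[of _ "D 0"]) (use KK Dp bound in auto)
qed

end
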